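(* Every two-bridge knot $K\subset S^3$ satisfies the Brumfiel–Hilden condition.
   Context: For a group $\pi$, the Brumfiel–Hilden algebra is $H[\pi]:=\mathbb{C}[\pi]/I$, where $I$ is the two-sided ideal of the group algebra generated by all elements $g(h+h^{-1})-(h+h^{-1})g$ with $g,h\in\pi$. $H^+[\pi]\subset H[\pi]$ is the subalgebra generated by the images of all $g+g^{-1}$, $g\in\pi$. For an element $X\in H[\pi]$ which is the image of a group element, $H^+[\pi][X^{\pm1}]$ denotes the subalgebra of $H[\pi]$ generated by $H^+[\pi]$, $X$ and $X^{-1}$. A knot $K\subset S^3$ with group $\pi=\pi_1(S^3\setminus K)$ and standard (commuting) meridian $m$ and longitude $l$ is said to satisfy the Brumfiel–Hilden condition if the image $Y$ of $l$ in $H[\pi]$ lies in $H^+[\pi][X^{\pm1}]$, where $X$ is the image of $m$. *)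

theory Defs
  imports Complex_Main "HOL-Library.Poly_Mapping"
begin

text \<open>A letter is a pair (generator, inverted); generator False = a, True = b.\<close>
type_synonym letter = "bool \<times> bool"

definition inv_letter :: "letter \<Rightarrow> letter" where
  "inv_letter x = (fst x, \<not> snd x)"

definition inv_word :: "letter list \<Rightarrow> letter list" where
  "inv_word w = rev (map inv_letter w)"

definition gen_a :: letter where "gen_a = (False, False)"
definition gen_b :: letter where "gen_b = (True, False)"

text \<open>Free monoid on the four letters a, a^-1, b, b^-1 (written additively,
  non-commutatively), used as the index monoid of the free associative algebra.\<close>
datatype fword = FW "letter list"

instantiation fword :: monoid_add
begin
fun plus_fword :: "fword \<Rightarrow> fword \<Rightarrow> fword" where
  "plus_fword (FW x) (FW y) = FW (x @ y)"
definition zero_fword :: fword where "zero_fword = FW []"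
instance proof
  fix a b c :: fword
  show "a + b + c = a + (b + c)" by (cases a; cases b; cases c) simp_all
  show "0 + a = a" by (cases a) (simp add: zero_fword_def)
  show "a + 0 = a" by (cases a) (simp add: zero_fword_def)
qed
end

text \<open>Free associative unital C-algebra on a, a^-1, b, b^-1.\<close>
type_synonym falg = "fword \<Rightarrow>\<^sub>0 complex"

definition mono :: "letter list \<Rightarrow> falg" where
  "mono w = Poly_Mapping.single (FW w) 1"

inductive_set two_sided_ideal :: "falg set \<Rightarrow> falg set" for S where
  zero: "0 \<in> two_sided_ideal S"
| gen: "s \<in> S \<Longrightarrow> u * s * v \<in> two_sided_ideal S"
| add: "x \<in> two_sided_ideal S \<Longrightarrow> y \<in> two_sided_ideal S \<Longrightarrow> x + y \<in> two_sided_ideal S"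

inductive_set subalg :: "falg set \<Rightarrow> falg set" for G where
  scalar: "Poly_Mapping.single 0 c \<in> subalg G"
| gen: "g \<in> G \<Longrightarrow> g \<in> subalg G"
| add: "x \<in> subalg G \<Longrightarrow> y \<in> subalg G \<Longrightarrow> x + y \<in> subalg G"
| mult: "x \<in> subalg G \<Longrightarrow> y \<in> subalg G \<Longrightarrow> x * y \<in> subalg G"

text \<open>For p odd, q odd, -p < q < p, gcd(p,q) = 1, the two-bridge knot b(p,q) has group
  <a,b | w a = b w>, w = a^e1 b^e2 a^e3 ... b^e(p-1), e_i = (-1)^floor(i q / p),
  meridian a and (standard, commuting) longitude  w* w a^(-2 sigma), where w* is w
  written backwards and sigma = e_1 + ... + e_(p-1).\<close>

definition tb_eps :: "int \<Rightarrow> int \<Rightarrow> nat \<Rightarrow> int" where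
  "tb_eps p q i = (if even ((int i * q) div p) then 1 else -1)"

definition letter_pow :: "bool \<Rightarrow> int \<Rightarrow> letter list" where
  "letter_pow x k = (if k \<ge> 0 then replicate (nat k) (x, False) else replicate (nat (- k)) (x, True))"

definition tb_word :: "int \<Rightarrow> int \<Rightarrow> letter list" where
  "tb_word p q = concat (map (\<lambda>i. letter_pow (even i) (tb_eps p q i)) [1..<nat p])"

definition tb_sigma :: "int \<Rightarrow> int \<Rightarrow> int" where
  "tb_sigma p q = (\<Sum>i\<in>{1..<nat p}. tb_eps p q i)"

definition tb_longitude :: "int \<Rightarrow> int \<Rightarrow> letter list" where
  "tb_longitude p q = rev (tb_word p q) @ tb_word p q @ letter_pow False (- 2 * tb_sigma p q)"

text \<open>Relations presenting H[pi] as a quotient of the free algebra: inverse relations,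
  the knot relation, and the Brumfiel-Hilden relations g(h+h^-1) = (h+h^-1)g for
  all group elements g, h (represented by arbitrary words).\<close>
definition BH_relations :: "int \<Rightarrow> int \<Rightarrow> falg set" where
  "BH_relations p q =
     {mono [x, inv_letter x] - 1 | x. True}
   \<union> {mono (tb_word p q @ [gen_a]) - mono (gen_b # tb_word p q)}
   \<union> {mono g * (mono h + mono (inv_word h)) - (mono h + mono (inv_word h)) * mono g | g h. True}"

text \<open>Generators of H^+[pi][X^{+-1}]: all g + g^-1, and X, X^-1.\<close>
definition Hplus_X_gens :: "falg set" where
  "Hplus_X_gens = {mono g + mono (inv_word g) | g. True} \<union> {mono [gen_a], mono [inv_letter gen_a]}"

definition two_bridge_BH_condition :: "int \<Rightarrow> int \<Rightarrow> bool" where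
  "two_bridge_BH_condition p q \<longleftrightarrow>
     (\<exists>z \<in> subalg Hplus_X_gens. mono (tb_longitude p q) - z \<in> two_sided_ideal (BH_relations p q))"

end

theory Submission
  imports Defs
begin


datatype 'r q4 = Q4 'r 'r 'r 'r


context
  fixes T U :: "'r::comm_ring_1"
begin

fun qmul :: "'r q4 \<Rightarrow> 'r q4 \<Rightarrow> 'r q4" where
  "qmul (Q4 x0 x1 x2 x3) (Q4 y0 y1 y2 y3) =
    Q4 (x0*y0 - x1*y1 + U*x2*y1 - T*T*x2*y1 - x2*y2 - T*x2*y3 - T*x3*y1 - x3*y3)
       (x0*y1 + x1*y0 + T*x1*y1 + T*x2*y1 + x2*y3 + U*x3*y1 - x3*y2)
       (x0*y2 - x1*y3 + x2*y0 + T*x2*y1 + T*x2*y2 + U*x2*y3 + x3*y1)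
       (x0*y3 + x1*y2 + T*x1*y3 - x2*y1 + x3*y0 + T*x3*y2 + U*x3*y3)"

definition qone :: "'r q4" where "qone = Q4 1 0 0 0"

fun qrho :: "'r q4 \<Rightarrow> 'r q4" where
  "qrho (Q4 x0 x1 x2 x3) = Q4 (x0 + x3*(U - T*T)) (x1 + x3*T) (x2 + x3*T) (- x3)"

fun qphi :: "'r q4 \<Rightarrow> 'r q4" where
  "qphi (Q4 x0 x1 x2 x3) = Q4 (x0 + x3*(U - T*T)) (x2 + x3*T) (x1 + x3*T) (- x3)"

fun vl :: "letter \<Rightarrow> 'r q4" where
  "vl (False, False) = Q4 0 1 0 0"
| "vl (False, True) = Q4 T (-1) 0 0"
| "vl (True, False) = Q4 0 0 1 0"
| "vl (True, True) = Q4 T 0 (-1) 0"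

fun vecw :: "letter list \<Rightarrow> 'r q4" where
  "vecw [] = qone"
| "vecw (l # x) = qmul (vl l) (vecw x)"

lemma qmul_assoc0: "qmul (qmul (Q4 a0 a1 a2 a3) (Q4 b0 b1 b2 b3)) (Q4 c0 c1 c2 c3) = qmul (Q4 a0 a1 a2 a3) (qmul (Q4 b0 b1 b2 b3) (Q4 c0 c1 c2 c3))"
  unfolding qmul.simps q4.inject
  by (intro conjI; simp add: algebra_simps)

lemma qmul_assoc: "qmul (qmul x y) z = qmul x (qmul y z)"
  by (cases x; cases y; cases z) (simp only: qmul_assoc0)

lemma qmul_one_left: "qmul qone x = x"
  by (cases x) (simp add: qone_def)

lemma qmul_one_right: "qmul x qone = x"
  by (cases x) (simp add: qone_def)

lemma qrho_mul0: "qrho (qmul (Q4 a0 a1 a2 a3) (Q4 b0 b1 b2 b3)) = qmul (qrho (Q4 b0 b1 b2 b3)) (qrho (Q4 a0 a1 a2 a3))"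
  unfolding qrho.simps qmul.simps q4.inject
  by (intro conjI; simp add: algebra_simps)

lemma qphi_mul0: "qphi (qmul (Q4 a0 a1 a2 a3) (Q4 b0 b1 b2 b3)) = qmul (qphi (Q4 a0 a1 a2 a3)) (qphi (Q4 b0 b1 b2 b3))"
  unfolding qphi.simps qmul.simps q4.inject
  by (intro conjI; simp add: algebra_simps)

lemma qrho_mul: "qrho (qmul x y) = qmul (qrho y) (qrho x)"
  by (cases x; cases y) (simp only: qrho_mul0)

lemma qphi_mul: "qphi (qmul x y) = qmul (qphi x) (qphi y)"
  by (cases x; cases y) (simp only: qphi_mul0)

lemma qrho_one: "qrho qone = qone" by (simp add: qone_def)
lemma qphi_one: "qphi qone = qone" by (simp add: qone_def)

definition swapl :: "letter \<Rightarrow> letter" where "swapl l = (\<not> fst l, snd l)"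

lemma qrho_vl: "qrho (vl l) = vl l"
  by (cases l rule: vl.cases) simp_all

lemma qphi_vl: "qphi (vl l) = vl (swapl l)"
  by (cases l rule: vl.cases) (simp_all add: swapl_def)

lemma vecw_append: "vecw (x @ y) = qmul (vecw x) (vecw y)"
  by (induction x) (simp_all add: qmul_one_left qmul_assoc)

lemma vecw_rev: "vecw (rev x) = qrho (vecw x)"
  by (induction x) (simp_all add: vecw_append qrho_mul qrho_one qrho_vl qmul_one_right)

lemma vecw_swap: "vecw (map swapl x) = qphi (vecw x)"
  by (induction x) (simp_all add: qphi_mul qphi_one qphi_vl)

fun qadd :: "'r q4 \<Rightarrow> 'r q4 \<Rightarrow> 'r q4" where
  "qadd (Q4 x0 x1 x2 x3) (Q4 y0 y1 y2 y3) = Q4 (x0+y0) (x1+y1) (x2+y2) (x3+y3)"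

fun qsub :: "'r q4 \<Rightarrow> 'r q4 \<Rightarrow> 'r q4" where
  "qsub (Q4 x0 x1 x2 x3) (Q4 y0 y1 y2 y3) = Q4 (x0-y0) (x1-y1) (x2-y2) (x3-y3)"

fun qsc :: "'r \<Rightarrow> 'r q4 \<Rightarrow> 'r q4" where
  "qsc c (Q4 x0 x1 x2 x3) = Q4 (c*x0) (c*x1) (c*x2) (c*x3)"

fun qc1 :: "'r q4 \<Rightarrow> 'r" where "qc1 (Q4 x0 x1 x2 x3) = x1"
fun qc2 :: "'r q4 \<Rightarrow> 'r" where "qc2 (Q4 x0 x1 x2 x3) = x2"
fun qc3 :: "'r q4 \<Rightarrow> 'r" where "qc3 (Q4 x0 x1 x2 x3) = x3"

lemma q4_shape: "qc2 r = 0 \<Longrightarrow> qc3 r = 0 \<Longrightarrow> \<exists>\<alpha> \<beta>. r = Q4 \<alpha> \<beta> 0 0"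
  by (cases r) simp

lemma core_identity:
  assumes "qrho v = qphi v"
  shows "\<exists>\<alpha> \<beta> lam. qadd (qmul (qrho v) v) (qsc lam (qsub (qmul v (Q4 0 1 0 0)) (qmul (Q4 0 0 1 0) v))) = Q4 \<alpha> \<beta> 0 0"
proof (cases v)
  case (Q4 x0 x1 x2 x3)
  from assms have "qrho (Q4 x0 x1 x2 x3) = qphi (Q4 x0 x1 x2 x3)" by (simp only: Q4)
  then have "qc1 (qrho (Q4 x0 x1 x2 x3)) = qc1 (qphi (Q4 x0 x1 x2 x3))" by (rule arg_cong)
  then have "x1 + x3*T = x2 + x3*T" by (simp only: qrho.simps qphi.simps qc1.simps)
  then have e: "x2 = x1" by (rule add_right_imp_eq[symmetric])
  define lam where "lam = 2*x1 + T*x3"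
  let ?r = "qadd (qmul (qrho v) v) (qsc lam (qsub (qmul v (Q4 0 1 0 0)) (qmul (Q4 0 0 1 0) v)))"
  have "qc2 ?r = 0" unfolding lam_def Q4 e qrho.simps qmul.simps qsub.simps qsc.simps qadd.simps qc2.simps
    by (simp add: algebra_simps)
  moreover have "qc3 ?r = 0" unfolding lam_def Q4 e qrho.simps qmul.simps qsub.simps qsc.simps qadd.simps qc3.simps
    by (simp add: algebra_simps)
  ultimately have "\<exists>\<alpha> \<beta>. ?r = Q4 \<alpha> \<beta> 0 0" by (rule q4_shape)
  then show ?thesis by blast
qed

end


lifting_forget poly_mapping.lifting

lemma tsi_mult_left: "x \<in> two_sided_ideal S \<Longrightarrow> w * x \<in> two_sided_ideal S"
proof (induction x rule: two_sided_ideal.induct)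
  case zero then show ?case by (simp add: two_sided_ideal.zero)
next
  case (gen s u v)
  have "w * (u * s * v) = (w * u) * s * v" by (simp add: mult.assoc)
  then show ?case using gen two_sided_ideal.gen by metis
next
  case (add x y) then show ?case by (simp add: distrib_left two_sided_ideal.add)
qed

lemma tsi_mult_right: "x \<in> two_sided_ideal S \<Longrightarrow> x * w \<in> two_sided_ideal S"
proof (induction x rule: two_sided_ideal.induct)
  case zero then show ?case by (simp add: two_sided_ideal.zero)
next
  case (gen s u v)
  have "(u * s * v) * w = u * s * (v * w)" by (simp add: mult.assoc)
  then show ?case using gen two_sided_ideal.gen by metis
next
  case (add x y) then show ?case by (simp add: distrib_right two_sided_ideal.add)
qed

lemma tsi_uminus: "x \<in> two_sided_ideal S \<Longrightarrow> - x \<in> two_sided_ideal S"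
  using tsi_mult_left[of x S "-1"] by simp

lemma tsi_add: "x \<in> two_sided_ideal S \<Longrightarrow> y \<in> two_sided_ideal S \<Longrightarrow> x + y \<in> two_sided_ideal S"
  by (rule two_sided_ideal.add)

lemma tsi_diff: "x \<in> two_sided_ideal S \<Longrightarrow> y \<in> two_sided_ideal S \<Longrightarrow> x - y \<in> two_sided_ideal S"
  using tsi_add[OF _ tsi_uminus] by (metis diff_conv_add_uminus)

lemma tsi_zero: "0 \<in> two_sided_ideal S" by (rule two_sided_ideal.zero)

lemma tsi_gen: "s \<in> S \<Longrightarrow> s \<in> two_sided_ideal S"
  using two_sided_ideal.gen[of s S 1 1] by simp

lemma tsi_subset:
  assumes "S \<subseteq> two_sided_ideal S'"
  shows "x \<in> two_sided_ideal S \<Longrightarrow> x \<in> two_sided_ideal S'"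
proof (induction x rule: two_sided_ideal.induct)
  case zero then show ?case by (rule tsi_zero)
next
  case (gen s u v) then show ?case using assms tsi_mult_left tsi_mult_right by blast
next
  case (add x y) then show ?case by (simp add: tsi_add)
qed

lemma falg_expand: "(x::falg) = (\<Sum>k\<in>Poly_Mapping.keys x. Poly_Mapping.single k (Poly_Mapping.lookup x k))"
proof (rule poly_mapping_eqI)
  fix i
  have "Poly_Mapping.lookup (\<Sum>k\<in>Poly_Mapping.keys x. Poly_Mapping.single k (Poly_Mapping.lookup x k)) i
        = (\<Sum>k\<in>Poly_Mapping.keys x. (if k = i then Poly_Mapping.lookup x k else 0))"
    by (simp add: lookup_sum lookup_single when_def)
  also have "\<dots> = Poly_Mapping.lookup x i"
    by (simp add: in_keys_iff)
  finally show "Poly_Mapping.lookup x i = Poly_Mapping.lookup (\<Sum>k\<in>Poly_Mapping.keys x. Poly_Mapping.single k (Poly_Mapping.lookup x k)) i" by simp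
qed

lemma falg_induct [case_names zero single add]:
  assumes "P 0" and "\<And>k c. P (Poly_Mapping.single k c)" and "\<And>x y. P x \<Longrightarrow> P y \<Longrightarrow> P (x + y)"
  shows "P (x::falg)"
proof -
  have "P (\<Sum>k\<in>K. Poly_Mapping.single k (Poly_Mapping.lookup x k))" if "finite K" for K
    using that by (induction K rule: finite_induct) (simp_all add: assms)
  then show ?thesis by (metis falg_expand finite_keys)
qed

lemma scalar_comm: "Poly_Mapping.single 0 c * (x::falg) = x * Poly_Mapping.single 0 c"
proof (induction x rule: falg_induct)
  case zero then show ?case by simp
next
  case (single k d) then show ?case by (simp add: mult_single mult.commute)
next
  case (add x y) then show ?case by (simp add: distrib_left distrib_right)
qed

definition aug :: "falg \<Rightarrow> complex" where "aug x = (\<Sum>k\<in>Poly_Mapping.keys x. Poly_Mapping.lookup x k)"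

lemma aug_superset: "finite S \<Longrightarrow> Poly_Mapping.keys x \<subseteq> S \<Longrightarrow> aug x = (\<Sum>k\<in>S. Poly_Mapping.lookup x k)"
  unfolding aug_def by (rule sum.mono_neutral_left) (auto simp: in_keys_iff)

lemma aug_add: "aug (x + y) = aug x + aug y"
proof -
  let ?S = "Poly_Mapping.keys x \<union> Poly_Mapping.keys y"
  have "aug (x + y) = (\<Sum>k\<in>?S. Poly_Mapping.lookup (x + y) k)"
    by (rule aug_superset) (simp_all add: keys_add)
  also have "\<dots> = (\<Sum>k\<in>?S. Poly_Mapping.lookup x k) + (\<Sum>k\<in>?S. Poly_Mapping.lookup y k)"
    by (simp add: lookup_add sum.distrib)
  also have "\<dots> = aug x + aug y"
    using aug_superset[of ?S x] aug_superset[of ?S y] by simp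
  finally show ?thesis .
qed

lemma aug_zero: "aug 0 = 0" by (simp add: aug_def)
lemma aug_single: "aug (Poly_Mapping.single k c) = c"
  by (cases "c = 0") (simp_all add: aug_def)

lemma aug_mult: "aug (x * y) = aug x * aug y"
proof (induction x rule: falg_induct)
  case zero then show ?case by (simp add: aug_zero)
next
  case (single k c)
  show ?case
  proof (induction y rule: falg_induct)
    case zero then show ?case by (simp add: aug_zero)
  next
    case (single l d) then show ?case by (simp add: mult_single aug_single)
  next
    case (add y z) then show ?case by (simp add: distrib_left aug_add)
  qed
next
  case (add x z) then show ?case by (simp add: distrib_right aug_add)
qed

lemma aug_one: "aug 1 = 1"
  using aug_single[of 0 1] by simp

lemma aug_mono: "aug (mono w) = 1" by (simp add: mono_def aug_single)

lemma aug_inv_word_len: "aug (mono g + mono h) = 2" by (simp add: aug_add aug_mono)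

definition R0 :: "falg set" where
  "R0 = {mono [x, inv_letter x] - 1 | x. True}
   \<union> {mono g * (mono h + mono (inv_word h)) - (mono h + mono (inv_word h)) * mono g | g h. True}
   \<union> {(mono [(False,False)] + mono [(False,True)]) - (mono [(True,False)] + mono [(True,True)])}"

definition J0 :: "falg set" where "J0 = two_sided_ideal R0"

lemma J0_zero: "0 \<in> J0" unfolding J0_def by (rule tsi_zero)
lemma J0_add: "x \<in> J0 \<Longrightarrow> y \<in> J0 \<Longrightarrow> x + y \<in> J0" unfolding J0_def by (rule tsi_add)
lemma J0_diff: "x \<in> J0 \<Longrightarrow> y \<in> J0 \<Longrightarrow> x - y \<in> J0" unfolding J0_def by (rule tsi_diff)
lemma J0_uminus: "x \<in> J0 \<Longrightarrow> - x \<in> J0" unfolding J0_def by (rule tsi_uminus)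
lemma J0_ml: "x \<in> J0 \<Longrightarrow> w * x \<in> J0" unfolding J0_def by (rule tsi_mult_left)
lemma J0_mr: "x \<in> J0 \<Longrightarrow> x * w \<in> J0" unfolding J0_def by (rule tsi_mult_right)

lemma aug_uminus: "aug (- x) = - aug x"
  using aug_add[of x "-x"] by (simp add: aug_zero add_eq_0_iff2)

lemma aug_diff: "aug (x - y) = aug x - aug y"
  using aug_add[of x "-y"] by (simp add: aug_uminus)

lemma aug_R0: "s \<in> R0 \<Longrightarrow> aug s = 0"
  unfolding R0_def by (auto simp: aug_diff aug_add aug_mult aug_mono aug_one)

lemma aug_J0: "x \<in> J0 \<Longrightarrow> aug x = 0"
  unfolding J0_def
proof (induction x rule: two_sided_ideal.induct)
  case zero then show ?case by (simp add: aug_zero)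
next
  case (gen s u v) then show ?case by (simp add: aug_mult aug_R0)
next
  case (add x y) then show ?case by (simp add: aug_add)
qed

lemma one_notin_J0: "(0::falg) - 1 \<notin> J0" "- (1::falg) \<notin> J0"
  using aug_J0 aug_one aug_uminus by fastforce+

definition rel0 :: "falg \<Rightarrow> falg \<Rightarrow> bool" where "rel0 x y \<longleftrightarrow> x - y \<in> J0"

lemma rel0_refl: "rel0 x x" by (simp add: rel0_def J0_zero)
lemma rel0_sym: "rel0 x y \<Longrightarrow> rel0 y x" unfolding rel0_def using J0_uminus by (metis minus_diff_eq)
lemma rel0_trans: "rel0 x y \<Longrightarrow> rel0 y z \<Longrightarrow> rel0 x z" unfolding rel0_def
proof -
  assume "x - y \<in> J0" "y - z \<in> J0"
  then have "(x - y) + (y - z) \<in> J0" using J0_add by blast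
  then show "x - z \<in> J0" by simp
qed

lemma equivp_rel0: "equivp rel0"
  by (rule equivpI) (auto simp: reflp_on_def symp_on_def transp_on_def intro: rel0_refl rel0_sym rel0_trans)

quotient_type H0 = falg / rel0
  by (fact equivp_rel0)

instantiation H0 :: ring_1
begin
lift_definition zero_H0 :: H0 is 0 .
lift_definition one_H0 :: H0 is 1 .
lift_definition plus_H0 :: "H0 \<Rightarrow> H0 \<Rightarrow> H0" is "(+)"
  unfolding rel0_def proof -
  fix x x' y y' :: falg assume "x - x' \<in> J0" "y - y' \<in> J0"
  then have "(x - x') + (y - y') \<in> J0" by (rule J0_add)
  then show "x + y - (x' + y') \<in> J0" by (simp add: algebra_simps)
qed
lift_definition uminus_H0 :: "H0 \<Rightarrow> H0" is uminus
  unfolding rel0_def proof -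
  fix x x' :: falg assume "x - x' \<in> J0"
  then have "- (x - x') \<in> J0" by (rule J0_uminus)
  then show "- x - - x' \<in> J0" by (simp add: algebra_simps)
qed
lift_definition minus_H0 :: "H0 \<Rightarrow> H0 \<Rightarrow> H0" is "(-)"
  unfolding rel0_def proof -
  fix x x' y y' :: falg assume "x - x' \<in> J0" "y - y' \<in> J0"
  then have "(x - x') - (y - y') \<in> J0" by (rule J0_diff)
  then show "x - y - (x' - y') \<in> J0" by (simp add: algebra_simps)
qed
lift_definition times_H0 :: "H0 \<Rightarrow> H0 \<Rightarrow> H0" is "(*)"
  unfolding rel0_def proof -
  fix x x' y y' :: falg assume a: "x - x' \<in> J0" "y - y' \<in> J0"
  have "(x - x') * y + x' * (y - y') \<in> J0" using a J0_ml J0_mr J0_add by blast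
  then show "x * y - x' * y' \<in> J0" by (simp add: algebra_simps)
qed
instance
proof
  fix a b c :: H0
  show "a * b * c = a * (b * c)" by transfer (simp add: rel0_def J0_zero mult.assoc)
  show "1 * a = a" by transfer (simp add: rel0_def J0_zero)
  show "a * 1 = a" by transfer (simp add: rel0_def J0_zero)
  show "(a + b) * c = a * c + b * c" by transfer (simp add: rel0_def J0_zero distrib_right)
  show "a * (b + c) = a * b + a * c" by transfer (simp add: rel0_def J0_zero distrib_left)
  show "a + b + c = a + (b + c)" by transfer (simp add: rel0_def J0_zero add.assoc)
  show "a + b = b + a" by transfer (simp add: rel0_def J0_zero add.commute)
  show "0 + a = a" by transfer (simp add: rel0_def J0_zero)
  show "- a + a = 0" by transfer (simp add: rel0_def J0_zero)
  show "a - b = a + - b" by transfer (simp add: rel0_def J0_zero)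
  show "(0::H0) \<noteq> 1" by transfer (simp add: rel0_def one_notin_J0)
qed
end

lift_definition cls :: "falg \<Rightarrow> H0" is "\<lambda>x. x" .

lemma cls_add: "cls (x + y) = cls x + cls y" by transfer (simp add: rel0_def J0_zero)
lemma cls_mult: "cls (x * y) = cls x * cls y" by transfer (simp add: rel0_def J0_zero)
lemma cls_diff: "cls (x - y) = cls x - cls y" by transfer (simp add: rel0_def J0_zero)
lemma cls_uminus: "cls (- x) = - cls x" by transfer (simp add: rel0_def J0_zero)
lemma cls_one: "cls 1 = 1" by transfer (simp add: rel0_def J0_zero)
lemma cls_zero: "cls 0 = 0" by transfer (simp add: rel0_def J0_zero)
lemma cls_eq: "cls x = cls y \<longleftrightarrow> x - y \<in> J0" by transfer (simp add: rel0_def)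
lemma cls_surj: "\<exists>x. h = cls x" by transfer (auto intro: rel0_refl)


lemma mono_append: "mono (x @ y) = mono x * mono y"
  by (simp add: mono_def mult_single)

lemma mono_Nil: "mono [] = 1"
proof -
  have "FW [] = 0" by (simp add: zero_fword_def)
  then show ?thesis by (simp add: mono_def)
qed

lemma mono_Cons: "mono (l # x) = mono [l] * mono x"
  using mono_append[of "[l]" x] by simp

lemma R0_J0: "s \<in> R0 \<Longrightarrow> s \<in> J0"
  unfolding J0_def by (rule tsi_gen)

lemma cls_R0: "x - y \<in> R0 \<Longrightarrow> cls x = cls y"
  using R0_J0 cls_eq by blast

lemma inv_rel: "cls (mono [x]) * cls (mono [inv_letter x]) = 1"
proof -
  have "mono [x, inv_letter x] - 1 \<in> R0" unfolding R0_def by blast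
  then have "cls (mono [x, inv_letter x]) = cls 1" by (rule cls_R0)
  then show ?thesis using mono_append[of "[x]" "[inv_letter x]"] by (simp add: cls_mult cls_one)
qed

lemma central_mono: "cls (mono g) * cls (mono h + mono (inv_word h)) = cls (mono h + mono (inv_word h)) * cls (mono g)"
proof -
  have "mono g * (mono h + mono (inv_word h)) - (mono h + mono (inv_word h)) * mono g \<in> R0"
    unfolding R0_def by blast
  then show ?thesis using cls_R0 cls_mult by metis
qed

lemma ta_tb: "cls (mono [(False,False)] + mono [(False,True)]) = cls (mono [(True,False)] + mono [(True,True)])"
  by (rule cls_R0) (simp add: R0_def)

lemma central_all:
  assumes "\<And>g. c * cls (mono g) = cls (mono g) * c"
  shows "c * y = y * c"
proof -
  obtain z where y: "y = cls z" using cls_surj by blast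
  obtain z' where c: "c = cls z'" using cls_surj by blast
  have "c * cls z = cls z * c"
  proof (induction z rule: falg_induct)
    case zero then show ?case by (simp add: cls_zero)
  next
    case (single k d)
    obtain w where k: "k = FW w" by (cases k)
    have e: "Poly_Mapping.single k d = Poly_Mapping.single 0 d * mono w"
      by (simp add: k mono_def mult_single)
    have s: "c * cls (Poly_Mapping.single 0 d) = cls (Poly_Mapping.single 0 d) * c"
      by (simp add: c cls_mult[symmetric] scalar_comm)
    have "c * cls (Poly_Mapping.single k d) = c * cls (Poly_Mapping.single 0 d) * cls (mono w)"
      by (simp add: e cls_mult mult.assoc)
    also have "\<dots> = cls (Poly_Mapping.single 0 d) * (c * cls (mono w))"
      by (simp add: s mult.assoc)
    also have "\<dots> = cls (Poly_Mapping.single k d) * c"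
      by (simp add: assms e cls_mult mult.assoc)
    finally show ?case .
  next
    case (add x y) then show ?case by (simp add: cls_add distrib_left distrib_right)
  qed
  then show ?thesis by (simp add: y)
qed

definition "Aa = cls (mono [(False,False)])"
definition "Ai = cls (mono [(False,True)])"
definition "Bb = cls (mono [(True,False)])"
definition "Bi = cls (mono [(True,True)])"
definition "TT = cls (mono [(False,False)] + mono [(False,True)])"
definition "UU = cls (mono [(False,False),(True,False)] + mono [(True,True),(False,True)])"

lemma TT_A: "TT = Aa + Ai" by (simp add: TT_def Aa_def Ai_def cls_add)
lemma TT_B: "TT = Bb + Bi"
proof -
  have "TT = cls (mono [(True,False)] + mono [(True,True)])" unfolding TT_def by (rule ta_tb)
  then show ?thesis by (simp add: Bb_def Bi_def cls_add)
qed
lemma UU_AB: "UU = Aa * Bb + Bi * Ai"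
  unfolding UU_def Aa_def Bb_def Bi_def Ai_def cls_add cls_mult[symmetric] mono_append[symmetric] by simp

lemma A_Ai: "Aa * Ai = 1" using inv_rel[of "(False,False)"] by (simp add: Aa_def Ai_def inv_letter_def)
lemma Ai_A: "Ai * Aa = 1" using inv_rel[of "(False,True)"] by (simp add: Aa_def Ai_def inv_letter_def)
lemma B_Bi: "Bb * Bi = 1" using inv_rel[of "(True,False)"] by (simp add: Bb_def Bi_def inv_letter_def)
lemma Bi_B: "Bi * Bb = 1" using inv_rel[of "(True,True)"] by (simp add: Bb_def Bi_def inv_letter_def)

lemma TT_central: "TT * y = y * TT"
proof (rule central_all)
  fix g
  show "TT * cls (mono g) = cls (mono g) * TT"
    using central_mono[of g "[(False,False)]"] by (simp add: TT_def inv_word_def inv_letter_def)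
qed

lemma UU_central: "UU * y = y * UU"
proof (rule central_all)
  fix g
  show "UU * cls (mono g) = cls (mono g) * UU"
    using central_mono[of g "[(False,False),(True,False)]"] by (simp add: UU_def inv_word_def inv_letter_def)
qed

lemma AA: "Aa * Aa = TT * Aa - 1"
  by (simp add: TT_A distrib_right Ai_A)

lemma BB: "Bb * Bb = TT * Bb - 1"
  by (simp add: TT_B distrib_right Bi_B)

lemma BA: "Bb * Aa = UU - TT * TT + TT * Aa + TT * Bb - Aa * Bb"
proof -
  have ai: "Ai = TT - Aa" by (simp add: TT_A)
  have bi: "Bi = TT - Bb" by (simp add: TT_B)
  have "UU = Aa * Bb + (TT - Bb) * (TT - Aa)" by (simp add: UU_AB ai bi)
  also have "\<dots> = Aa * Bb + TT * TT - TT * Aa - Bb * TT + Bb * Aa" by (simp add: algebra_simps)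
  also have "\<dots> = Aa * Bb + TT * TT - TT * Aa - TT * Bb + Bb * Aa" by (simp add: TT_central[of Bb])
  finally show ?thesis by (simp add: algebra_simps)
qed


lifting_forget H0.lifting

definition Hp :: "H0 set" where
  "Hp = {h. (\<forall>y. h * y = y * h) \<and> (\<exists>z \<in> subalg Hplus_X_gens. h = cls z)}"

lemma Hp_zero: "0 \<in> Hp"
proof -
  have "Poly_Mapping.single 0 0 \<in> subalg Hplus_X_gens" by (rule subalg.scalar)
  moreover have "(0::H0) = cls (Poly_Mapping.single 0 0)" by (simp add: cls_zero)
  ultimately show ?thesis unfolding Hp_def by auto
qed

lemma Hp_one: "1 \<in> Hp"
proof -
  have "Poly_Mapping.single 0 1 \<in> subalg Hplus_X_gens" by (rule subalg.scalar)
  moreover have "(1::H0) = cls (Poly_Mapping.single 0 1)" by (simp add: cls_one)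
  ultimately show ?thesis unfolding Hp_def by auto
qed

lemma Hp_add: "a \<in> Hp \<Longrightarrow> b \<in> Hp \<Longrightarrow> a + b \<in> Hp"
proof -
  assume a: "a \<in> Hp" and b: "b \<in> Hp"
  then obtain za zb where za: "za \<in> subalg Hplus_X_gens" "a = cls za" and zb: "zb \<in> subalg Hplus_X_gens" "b = cls zb"
    unfolding Hp_def by blast
  have ca: "\<And>y. a * y = y * a" and cb: "\<And>y. b * y = y * b" using a b unfolding Hp_def by blast+
  have "(a + b) * y = y * (a + b)" for y
    by (simp only: distrib_left distrib_right ca[of y] cb[of y])
  moreover have "a + b = cls (za + zb)" by (simp add: za zb cls_add)
  ultimately show ?thesis unfolding Hp_def using subalg.add[OF za(1) zb(1)] by blast
qed

lemma Hp_mult: "a \<in> Hp \<Longrightarrow> b \<in> Hp \<Longrightarrow> a * b \<in> Hp"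
proof -
  assume a: "a \<in> Hp" and b: "b \<in> Hp"
  then obtain za zb where za: "za \<in> subalg Hplus_X_gens" "a = cls za" and zb: "zb \<in> subalg Hplus_X_gens" "b = cls zb"
    unfolding Hp_def by blast
  have ca: "\<And>y. a * y = y * a" and cb: "\<And>y. b * y = y * b" using a b unfolding Hp_def by blast+
  have "a * b * y = y * (a * b)" for y
  proof -
    have "a * b * y = a * (y * b)" by (simp only: mult.assoc cb[of y])
    also have "\<dots> = (a * y) * b" by (simp only: mult.assoc)
    also have "\<dots> = y * (a * b)" by (simp only: mult.assoc ca[of y])
    finally show ?thesis .
  qed
  moreover have "a * b = cls (za * zb)" by (simp add: za zb cls_mult)
  ultimately show ?thesis unfolding Hp_def using subalg.mult[OF za(1) zb(1)] by blast
qed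

lemma Hp_uminus: "a \<in> Hp \<Longrightarrow> - a \<in> Hp"
proof -
  assume a: "a \<in> Hp"
  then obtain za where za: "za \<in> subalg Hplus_X_gens" "a = cls za" unfolding Hp_def by blast
  have z1: "Poly_Mapping.single 0 (-1) * za \<in> subalg Hplus_X_gens"
    by (rule subalg.mult[OF subalg.scalar za(1)])
  have z2: "Poly_Mapping.single 0 (-1) * za = - za"
    by (simp add: single_uminus)
  have "- a = cls (- za)" using za(2) cls_uminus[of za] by simp
  then have ex: "\<exists>z \<in> subalg Hplus_X_gens. - a = cls z"
    using z1 z2 by (intro bexI[where x = "- za"]) simp_all
  have ca: "\<And>y. a * y = y * a" using a unfolding Hp_def by blast
  have "- a * y = y * - a" for y using ca[of y] by simp
  with ex show ?thesis unfolding Hp_def by blast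
qed

lemma Hp_comm: "a \<in> Hp \<Longrightarrow> a * b = b * a"
  unfolding Hp_def by blast

typedef Cc = Hp morphisms RC AC
  using Hp_zero by blast

setup_lifting type_definition_Cc

instantiation Cc :: comm_ring_1
begin
lift_definition zero_Cc :: Cc is 0 by (rule Hp_zero)
lift_definition one_Cc :: Cc is 1 by (rule Hp_one)
lift_definition plus_Cc :: "Cc \<Rightarrow> Cc \<Rightarrow> Cc" is "(+)" by (rule Hp_add)
lift_definition times_Cc :: "Cc \<Rightarrow> Cc \<Rightarrow> Cc" is "(*)" by (rule Hp_mult)
lift_definition uminus_Cc :: "Cc \<Rightarrow> Cc" is uminus by (rule Hp_uminus)
lift_definition minus_Cc :: "Cc \<Rightarrow> Cc \<Rightarrow> Cc" is "(-)"
  by (metis Hp_add Hp_uminus diff_conv_add_uminus)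
instance
proof
  fix a b c :: Cc
  show "a * b * c = a * (b * c)" by transfer (simp add: mult.assoc)
  show "a * b = b * a" by transfer (rule Hp_comm)
  show "1 * a = a" by transfer simp
  show "(a + b) * c = a * c + b * c" by transfer (simp add: distrib_right)
  show "a + b + c = a + (b + c)" by transfer (simp add: add.assoc)
  show "a + b = b + a" by transfer (simp add: add.commute)
  show "0 + a = a" by transfer simp
  show "- a + a = 0" by transfer simp
  show "a - b = a + - b" by transfer simp
  show "(0::Cc) \<noteq> 1" by transfer simp
qed
end

lemma RC_add: "RC (a + b) = RC a + RC b" by transfer simp
lemma RC_mult: "RC (a * b) = RC a * RC b" by transfer simp
lemma RC_uminus: "RC (- a) = - RC a" by transfer simp
lemma RC_diff: "RC (a - b) = RC a - RC b" by transfer simp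
lemma RC_zero: "RC 0 = 0" by transfer simp
lemma RC_one: "RC 1 = 1" by transfer simp
lemma RC_central: "RC c * y = y * RC c" using RC[of c] unfolding Hp_def by blast
lemma RC_cls: "\<exists>z \<in> subalg Hplus_X_gens. RC c = cls z" using RC[of c] unfolding Hp_def by blast

lemma TT_Hp: "TT \<in> Hp"
proof -
  have "mono [(False,False)] + mono (inv_word [(False,False)]) \<in> Hplus_X_gens"
    unfolding Hplus_X_gens_def by blast
  then have "mono [(False,False)] + mono [(False,True)] \<in> subalg Hplus_X_gens"
    by (simp add: inv_word_def inv_letter_def subalg.gen)
  then have "\<exists>z \<in> subalg Hplus_X_gens. TT = cls z" unfolding TT_def by blast
  then show ?thesis unfolding Hp_def using TT_central by blast
qed

lemma UU_Hp: "UU \<in> Hp"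
proof -
  have "mono [(False,False),(True,False)] + mono (inv_word [(False,False),(True,False)]) \<in> Hplus_X_gens"
    unfolding Hplus_X_gens_def by blast
  then have "mono [(False,False),(True,False)] + mono [(True,True),(False,True)] \<in> subalg Hplus_X_gens"
    by (simp add: inv_word_def inv_letter_def subalg.gen)
  then have "\<exists>z \<in> subalg Hplus_X_gens. UU = cls z" unfolding UU_def by blast
  then show ?thesis unfolding Hp_def using UU_central by blast
qed

definition "TC = AC TT"
definition "UC = AC UU"
lemma RC_TC: "RC TC = TT" by (simp add: TC_def AC_inverse TT_Hp)
lemma RC_UC: "RC UC = UU" by (simp add: UC_def AC_inverse UU_Hp)


lemma BAB: "Bb * (Aa * Bb) = UU * Bb - TT + Aa"
proof -
  have "Bb * (Aa * Bb) = (Bb * Aa) * Bb" by (simp add: mult.assoc)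
  also have "\<dots> = (UU - TT * TT + TT * Aa + TT * Bb - Aa * Bb) * Bb" by (simp only: BA)
  also have "\<dots> = UU * Bb - TT * TT * Bb + TT * Aa * Bb + TT * (Bb * Bb) - Aa * (Bb * Bb)"
    by (simp add: algebra_simps)
  also have "\<dots> = UU * Bb - TT * TT * Bb + TT * Aa * Bb + TT * (TT * Bb - 1) - Aa * (TT * Bb - 1)"
    by (simp only: BB)
  also have "\<dots> = UU * Bb - TT * TT * Bb + TT * Aa * Bb + TT * (TT * Bb) - TT - Aa * TT * Bb + Aa"
    by (simp add: algebra_simps)
  also have "\<dots> = UU * Bb - TT + Aa"
    by (simp add: TT_central[of Aa, symmetric] algebra_simps)
  finally show ?thesis .
qed

lemma RC_fold: "RC a * RC b = RC (a * b)" "RC a * (RC b * z) = RC (a * b) * z"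
  by (simp_all add: RC_mult mult.assoc)

fun ev :: "Cc q4 \<Rightarrow> H0" where
  "ev (Q4 x0 x1 x2 x3) = RC x0 + RC x1 * Aa + RC x2 * Bb + RC x3 * (Aa * Bb)"

lemma ev_qadd: "ev (qadd x y) = ev x + ev y"
  by (cases x; cases y) (simp add: RC_add algebra_simps)

lemma ev_qsub: "ev (qsub x y) = ev x - ev y"
  by (cases x; cases y) (simp add: RC_diff algebra_simps)

lemma ev_qsc: "ev (qsc c x) = RC c * ev x"
  by (cases x) (simp add: RC_fold algebra_simps)

lemma ev_qone: "ev qone = 1"
  by (simp add: qone_def RC_zero RC_one)

lemma ev_A: "ev (qmul TC UC (Q4 0 1 0 0) v) = Aa * ev v"
proof (cases v)
  case (Q4 y0 y1 y2 y3)
  have cA: "\<And>c. Aa * RC c = RC c * Aa" by (simp add: RC_central)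
  have "Aa * ev v = RC y0 * Aa + RC y1 * (Aa * Aa) + RC y2 * (Aa * Bb) + RC y3 * ((Aa * Aa) * Bb)"
    by (simp add: Q4 distrib_left mult.assoc[symmetric] cA)
  also have "\<dots> = RC y0 * Aa + RC y1 * (TT * Aa - 1) + RC y2 * (Aa * Bb) + RC y3 * ((TT * Aa - 1) * Bb)"
    by (simp only: AA)
  also have "\<dots> = ev (Q4 (- y1) (y0 + y1 * TC) (- y3) (y2 + y3 * TC))"
    by (simp add: RC_add RC_fold RC_uminus RC_TC[symmetric] algebra_simps)
  also have "Q4 (- y1) (y0 + y1 * TC) (- y3) (y2 + y3 * TC) = qmul TC UC (Q4 0 1 0 0) v"
    by (simp add: Q4 algebra_simps)
  finally show ?thesis by simp
qed

lemma ev_B: "ev (qmul TC UC (Q4 0 0 1 0) v) = Bb * ev v"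
proof (cases v)
  case (Q4 y0 y1 y2 y3)
  have cB: "\<And>c. Bb * RC c = RC c * Bb" by (simp add: RC_central)
  have "Bb * ev v = RC y0 * Bb + RC y1 * (Bb * Aa) + RC y2 * (Bb * Bb) + RC y3 * (Bb * (Aa * Bb))"
    by (simp add: Q4 distrib_left mult.assoc[symmetric] cB)
  also have "\<dots> = RC y0 * Bb + RC y1 * (UU - TT * TT + TT * Aa + TT * Bb - Aa * Bb) + RC y2 * (TT * Bb - 1) + RC y3 * (UU * Bb - TT + Aa)"
    by (simp only: BA BB BAB)
  also have "\<dots> = ev (Q4 (y1 * (UC - TC * TC) - y2 - y3 * TC) (y1 * TC + y3) (y0 + y1 * TC + y2 * TC + y3 * UC) (- y1))"
    by (simp add: RC_add RC_fold RC_uminus RC_diff RC_TC[symmetric] RC_UC[symmetric] algebra_simps)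
  also have "Q4 (y1 * (UC - TC * TC) - y2 - y3 * TC) (y1 * TC + y3) (y0 + y1 * TC + y2 * TC + y3 * UC) (- y1) = qmul TC UC (Q4 0 0 1 0) v"
    by (simp add: Q4 algebra_simps)
  finally show ?thesis by simp
qed

lemma qmul_ai: "qmul T U (Q4 T (-1) 0 0) v = qsub (qsc T v) (qmul T U (Q4 0 1 0 0) v)"
  by (cases v) (simp add: algebra_simps)

lemma qmul_bi: "qmul T U (Q4 T 0 (-1) 0) v = qsub (qsc T v) (qmul T U (Q4 0 0 1 0) v)"
  by (cases v) (simp add: algebra_simps)

lemma Ai_TT: "Ai = TT - Aa" by (simp add: TT_A)
lemma Bi_TT: "Bi = TT - Bb" by (simp add: TT_B)

lemma ev_letter: "ev (qmul TC UC (vl TC l) v) = cls (mono [l]) * ev v"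
proof (cases l rule: vl.cases)
  case 1 then show ?thesis using ev_A by (simp add: Aa_def)
next
  case 2
  have "ev (qmul TC UC (vl TC l) v) = TT * ev v - Aa * ev v"
    by (simp add: 2 qmul_ai ev_qsub ev_qsc ev_A RC_TC)
  also have "\<dots> = Ai * ev v" by (simp add: Ai_TT algebra_simps)
  finally show ?thesis by (simp add: 2 Ai_def)
next
  case 3 then show ?thesis using ev_B by (simp add: Bb_def)
next
  case 4
  have "ev (qmul TC UC (vl TC l) v) = TT * ev v - Bb * ev v"
    by (simp add: 4 qmul_bi ev_qsub ev_qsc ev_B RC_TC)
  also have "\<dots> = Bi * ev v" by (simp add: Bi_TT algebra_simps)
  finally show ?thesis by (simp add: 4 Bi_def)
qed

lemma ev_vecw: "ev (vecw TC UC x) = cls (mono x)"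
proof (induction x)
  case Nil then show ?case by (simp add: ev_qone mono_Nil cls_one)
next
  case (Cons l x)
  have "ev (vecw TC UC (l # x)) = cls (mono [l]) * ev (vecw TC UC x)"
    by (simp add: ev_letter)
  also have "\<dots> = cls (mono (l # x))" by (simp add: Cons.IH mono_Cons[of l x] cls_mult)
  finally show ?case .
qed


definition lt :: "int \<Rightarrow> int \<Rightarrow> nat \<Rightarrow> letter" where
  "lt p q i = (even i, odd ((int i * q) div p))"

lemma concat_single: "(\<And>i. f i = [g i]) \<Longrightarrow> concat (map f xs) = map g xs"
  by (induction xs) simp_all

lemma tb_word_map: "tb_word p q = map (lt p q) [1..<nat p]"
  unfolding tb_word_def
  by (rule concat_single) (simp add: letter_pow_def tb_eps_def lt_def)

lemma rev_upt1: "rev [1..<n] = map (\<lambda>i. n - i) [1..<n]"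
proof (rule nth_equalityI)
  show "length (rev [1..<n]) = length (map (\<lambda>i. n - i) [1..<n])" by simp
next
  fix k assume "k < length (rev [1..<n])"
  then have k: "k < n - 1" by simp
  then show "rev [1..<n] ! k = map (\<lambda>i. n - i) [1..<n] ! k"
    by (simp add: rev_nth nth_upt)
qed

lemma div_flip:
  fixes p q :: int and i :: nat
  assumes p: "p > 0" and odd: "odd q" and nd: "\<not> p dvd (int i * q)"
  shows "even (((p - int i) * q) div p) \<longleftrightarrow> even ((int i * q) div p)"
proof -
  define d where "d = (int i * q) div p"
  define r where "r = (int i * q) mod p"
  have iq: "int i * q = p * d + r" by (simp add: d_def r_def)
  have r0: "r \<noteq> 0" using nd by (simp add: r_def dvd_eq_mod_eq_0)
  have r1: "0 \<le> r" "r < p" using p by (simp_all add: r_def)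
  have "(p - int i) * q = (p - r) + p * (q - d - 1)"
    using iq by (simp add: algebra_simps)
  then have "((p - int i) * q) div p = (p - r) div p + (q - d - 1)"
    using p by simp
  also have "(p - r) div p = 0" using r0 r1 by (simp add: div_pos_pos_trivial)
  finally have "((p - int i) * q) div p = q - d - 1" by simp
  then show ?thesis using odd by (simp add: d_def)
qed

lemma tb_word_sym:
  fixes p q :: int
  assumes "p \<ge> 3" and "odd p" and "odd q" and "coprime p q"
  shows "rev (tb_word p q) = map swapl (tb_word p q)"
proof -
  define n where "n = nat p"
  have pn: "p = int n" using assms(1) by (simp add: n_def)
  have "rev (tb_word p q) = map (lt p q) (rev [1..<n])" by (simp add: tb_word_map n_def rev_map)
  also have "\<dots> = map (\<lambda>i. lt p q (n - i)) [1..<n]" by (simp only: rev_upt1 map_map comp_def)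
  also have "\<dots> = map (\<lambda>i. swapl (lt p q i)) [1..<n]"
  proof (rule map_cong[OF refl])
    fix i assume "i \<in> set [1..<n]"
    then have i: "1 \<le> i" "i < n" by auto
    have on: "odd n" using assms(2) pn by simp
    have e1: "even (n - i) \<longleftrightarrow> \<not> even i" using on i by (simp add: even_diff_nat)
    have nd: "\<not> p dvd (int i * q)"
    proof
      assume "p dvd int i * q"
      then have "p dvd int i" using assms(4) by (simp add: coprime_dvd_mult_left_iff)
      then have "p \<le> int i" using i by (simp add: zdvd_imp_le)
      then show False using i pn by simp
    qed
    have "int (n - i) = p - int i" using i pn by simp
    then have e2: "even ((int (n - i) * q) div p) \<longleftrightarrow> even ((int i * q) div p)"
      using div_flip[OF _ assms(3) nd] assms(1) by simp
    show "lt p q (n - i) = swapl (lt p q i)"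
      using e1 e2 on i by (simp add: lt_def swapl_def)
  qed
  also have "\<dots> = map swapl (tb_word p q)" by (simp add: tb_word_map n_def)
  finally show ?thesis .
qed


lemma inv_word_Cons: "inv_word (l # x) = inv_word x @ [inv_letter l]"
  by (simp add: inv_word_def)

lemma word_inv:
  assumes "\<And>x. mono [x, inv_letter x] - 1 \<in> S"
  shows "mono x * mono (inv_word x) - 1 \<in> two_sided_ideal S"
proof (induction x)
  case Nil then show ?case by (simp add: inv_word_def mono_Nil tsi_zero)
next
  case (Cons l x)
  define M where "M = mono x * mono (inv_word x)"
  have e: "mono (l # x) * mono (inv_word (l # x)) - 1
        = mono [l] * (M - 1) * mono [inv_letter l] + (mono [l, inv_letter l] - 1)"
    unfolding M_def inv_word_Cons mono_append mono_Cons[of l x] mono_Cons[of l "[inv_letter l]"] mono_Nil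
    by (simp add: algebra_simps)
  have "mono [l] * (M - 1) * mono [inv_letter l] \<in> two_sided_ideal S"
    using Cons.IH unfolding M_def by (intro tsi_mult_right tsi_mult_left)
  moreover have "mono [l, inv_letter l] - 1 \<in> two_sided_ideal S"
    by (rule tsi_gen[OF assms])
  ultimately show ?case unfolding e by (rule tsi_add)
qed

lemma J0_sub:
  fixes p q :: int
  defines "J \<equiv> two_sided_ideal (BH_relations p q)"
  assumes x: "x \<in> J0"
  shows "x \<in> J"
proof -
  have invs: "\<And>x. mono [x, inv_letter x] - 1 \<in> BH_relations p q"
    unfolding BH_relations_def by blast
  define w where "w = tb_word p q"
  define W where "W = mono w"
  define Wi where "Wi = mono (inv_word w)"
  define A where "A = mono [(False,False)]"
  define Ai where "Ai = mono [(False,True)]"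
  define B where "B = mono [(True,False)]"
  define Bi where "Bi = mono [(True,True)]"
  have K: "W * A - B * W \<in> J"
  proof -
    have "mono (tb_word p q @ [gen_a]) - mono (gen_b # tb_word p q) \<in> BH_relations p q"
      unfolding BH_relations_def by blast
    then show ?thesis unfolding J_def W_def A_def B_def w_def gen_a_def gen_b_def
      using mono_append mono_Cons tsi_gen by metis
  qed
  have e1: "A * Ai - 1 \<in> J"
    using tsi_gen[OF invs[of "(False,False)"]] unfolding J_def A_def Ai_def
    by (simp add: inv_letter_def mono_Cons[of _ "[_]"])
  have e2: "Bi * B - 1 \<in> J"
    using tsi_gen[OF invs[of "(True,True)"]] unfolding J_def B_def Bi_def
    by (simp add: inv_letter_def mono_Cons[of _ "[_]"])
  have c: "W * (A + Ai) - (A + Ai) * W \<in> J"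
  proof -
    have "mono w * (mono [(False,False)] + mono (inv_word [(False,False)])) - (mono [(False,False)] + mono (inv_word [(False,False)])) * mono w \<in> BH_relations p q"
      unfolding BH_relations_def by blast
    then show ?thesis unfolding J_def W_def A_def Ai_def
      by (simp add: inv_word_def inv_letter_def tsi_gen)
  qed
  have s1: "Bi * (W * A - B * W) * Ai \<in> J" using K unfolding J_def by (intro tsi_mult_right tsi_mult_left)
  have s2: "Bi * W * (A * Ai - 1) \<in> J" using e1 unfolding J_def by (rule tsi_mult_left)
  have s3: "(Bi * B - 1) * W * Ai \<in> J" using e2 unfolding J_def by (intro tsi_mult_right)
  have "Bi * (W * A - B * W) * Ai - Bi * W * (A * Ai - 1) + (Bi * B - 1) * W * Ai \<in> J"
    using tsi_add[OF tsi_diff[OF s1[unfolded J_def] s2[unfolded J_def]] s3[unfolded J_def]] unfolding J_def .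
  then have BW: "Bi * W - W * Ai \<in> J" by (simp add: algebra_simps)
  define D where "D = (A + Ai) - (B + Bi)"
  have "- (W * (A + Ai) - (A + Ai) * W) + (W * A - B * W) - (Bi * W - W * Ai) \<in> J"
    using tsi_diff[OF tsi_add[OF tsi_uminus[OF c[unfolded J_def]] K[unfolded J_def]] BW[unfolded J_def]] unfolding J_def .
  then have DW: "D * W \<in> J" unfolding D_def by (simp add: algebra_simps)
  have WWi: "W * Wi - 1 \<in> J" unfolding J_def W_def Wi_def by (rule word_inv[OF invs])
  have "D * W * Wi - D * (W * Wi - 1) \<in> J"
    using tsi_diff[OF tsi_mult_right[OF DW[unfolded J_def]] tsi_mult_left[OF WWi[unfolded J_def]]] unfolding J_def .
  then have Dj: "D \<in> J" by (simp add: algebra_simps)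
  have R0J: "R0 \<subseteq> J"
  proof
    fix s assume "s \<in> R0"
    then consider (i) x where "s = mono [x, inv_letter x] - 1"
      | (c) g h where "s = mono g * (mono h + mono (inv_word h)) - (mono h + mono (inv_word h)) * mono g"
      | (d) "s = (mono [(False,False)] + mono [(False,True)]) - (mono [(True,False)] + mono [(True,True)])"
      unfolding R0_def by blast
    then show "s \<in> J"
    proof cases
      case i then show ?thesis unfolding J_def using invs tsi_gen by blast
    next
      case c
      then have "s \<in> BH_relations p q" unfolding BH_relations_def by blast
      then show ?thesis unfolding J_def by (rule tsi_gen)
    next
      case d then show ?thesis using Dj unfolding D_def A_def Ai_def B_def Bi_def by simp
    qed
  qed
  show ?thesis using x unfolding J0_def J_def
    by (rule tsi_subset[OF R0J[unfolded J_def]])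
qed


lemma mono_apow_subalg: "mono (letter_pow False k) \<in> subalg Hplus_X_gens"
proof -
  have gens: "mono [(False,False)] \<in> subalg Hplus_X_gens" "mono [(False,True)] \<in> subalg Hplus_X_gens"
    unfolding Hplus_X_gens_def gen_a_def inv_letter_def by (auto intro: subalg.gen)
  have rep: "mono (replicate n l) \<in> subalg Hplus_X_gens" if "mono [l] \<in> subalg Hplus_X_gens" for n l
  proof (induction n)
    case 0
    have "mono [] = Poly_Mapping.single 0 1" by (simp add: mono_Nil)
    then show ?case using subalg.scalar[of 1 Hplus_X_gens] by simp
  next
    case (Suc n)
    then show ?case using that mono_Cons[of l "replicate n l"] by (simp add: subalg.mult)
  qed
  show ?thesis unfolding letter_pow_def using gens rep by simp
qed

theorem mainTheorem9:
  fixes p q :: int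
  assumes "p \<ge> 3" and "odd p" and "odd q" and "- p < q" and "q < p" and "coprime p q"
  shows "two_bridge_BH_condition p q"
proof -
  define J where "J = two_sided_ideal (BH_relations p q)"
  define w where "w = tb_word p q"
  define v where "v = vecw TC UC w"
  have sym: "rev w = map swapl w" unfolding w_def using tb_word_sym assms by blast
  have rv: "qrho TC UC v = qphi TC UC v"
    unfolding v_def using vecw_rev[of TC UC w] vecw_swap[of TC UC w] sym by simp
  obtain \<alpha> \<beta> lam where core: "qadd (qmul TC UC (qrho TC UC v) v)
      (qsc lam (qsub (qmul TC UC v (Q4 0 1 0 0)) (qmul TC UC (Q4 0 0 1 0) v))) = Q4 \<alpha> \<beta> 0 0"
    using core_identity[OF rv] by blast
  have v1: "qmul TC UC (qrho TC UC v) v = vecw TC UC (rev w @ w)"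
    unfolding v_def by (simp add: vecw_append vecw_rev)
  have v2: "qmul TC UC v (Q4 0 1 0 0) = vecw TC UC (w @ [gen_a])"
    unfolding v_def by (simp add: vecw_append gen_a_def qmul_one_right)
  have v3: "qmul TC UC (Q4 0 0 1 0) v = vecw TC UC (gen_b # w)"
    unfolding v_def by (simp add: gen_b_def)
  have "ev (Q4 \<alpha> \<beta> 0 0) = cls (mono (rev w @ w)) + RC lam * (cls (mono (w @ [gen_a])) - cls (mono (gen_b # w)))"
    unfolding core[symmetric] v1 v2 v3 by (simp only: ev_qadd ev_qsc ev_qsub ev_vecw)
  then have eq: "cls (mono (rev w @ w)) + RC lam * (cls (mono (w @ [gen_a])) - cls (mono (gen_b # w))) = RC \<alpha> + RC \<beta> * Aa"
    by (simp add: RC_zero)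
  obtain za where za: "za \<in> subalg Hplus_X_gens" "RC \<alpha> = cls za" using RC_cls by blast
  obtain zb where zb: "zb \<in> subalg Hplus_X_gens" "RC \<beta> = cls zb" using RC_cls by blast
  obtain zl where zl: "zl \<in> subalg Hplus_X_gens" "RC lam = cls zl" using RC_cls by blast
  define K where "K = mono (w @ [gen_a]) - mono (gen_b # w)"
  define z0 where "z0 = za + zb * mono [gen_a]"
  have "cls (mono (rev w @ w) + zl * K) = cls z0"
    using eq unfolding K_def z0_def za(2) zb(2) zl(2) Aa_def gen_a_def
    by (simp add: cls_add cls_mult cls_diff)
  then have X: "mono (rev w @ w) + zl * K - z0 \<in> J0" by (simp add: cls_eq)
  then have XJ: "mono (rev w @ w) + zl * K - z0 \<in> J" unfolding J_def by (rule J0_sub)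
  have KJ: "zl * K \<in> J"
  proof -
    have "K \<in> BH_relations p q" unfolding K_def w_def BH_relations_def by blast
    then show ?thesis unfolding J_def by (intro tsi_mult_left tsi_gen)
  qed
  have "(mono (rev w @ w) + zl * K - z0) - zl * K \<in> J"
    using tsi_diff[OF XJ[unfolded J_def] KJ[unfolded J_def]] unfolding J_def .
  then have Y: "mono (rev w @ w) - z0 \<in> J" by (simp add: algebra_simps)
  define apow where "apow = letter_pow False (- 2 * tb_sigma p q)"
  have long: "tb_longitude p q = (rev w @ w) @ apow"
    unfolding tb_longitude_def w_def apow_def by simp
  have "(mono (rev w @ w) - z0) * mono apow \<in> J"
    using Y unfolding J_def by (rule tsi_mult_right)
  then have Z: "mono (tb_longitude p q) - z0 * mono apow \<in> J"
    unfolding long mono_append by (simp add: algebra_simps)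
  have "z0 * mono apow \<in> subalg Hplus_X_gens"
  proof -
    have "mono [gen_a] \<in> subalg Hplus_X_gens" unfolding Hplus_X_gens_def by (auto intro: subalg.gen)
    then have "z0 \<in> subalg Hplus_X_gens" unfolding z0_def using za(1) zb(1) by (intro subalg.add subalg.mult)
    then show ?thesis unfolding apow_def by (intro subalg.mult mono_apow_subalg)
  qed
  then show ?thesis unfolding two_bridge_BH_condition_def using Z unfolding J_def by blast
qed


end
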